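(* Let $\mathbf{IL}\mathsf{X}$ be a Horn logic and let $\Gamma$ be a finite set of formulas. In the construction of the systematic $\mathbf{IL}\mathsf{X}$-tableau for $\Gamma$ (stages $T_0\subseteq T_1\subseteq\cdots$ with markings $\mu(T_i)$), if a node $\sigma :: A$ is marked awake in $\mu(T_{n+1})$, then at some later stage the procedure selects (visits) the node $\sigma :: A$.
   Context: Formulas: built from a countable set $\mathsf{Prop}$ of propositional variables by $\neg$, $\to$, unary $\Box$ and binary $\rhd$. $\mathbf{IL}$ is the modal logic with axioms all instances of propositional tautologies and the schemes $\Box(A\to B)\to(\Box A\to\Box B)$, $\Box(\Box A\to A)\to\Box A$, $\Box(A\to B)\to A\rhd B$, $(A\rhd B)\wedge(B\rhd C)\to A\rhd C$, $(A\rhd C)\wedge(B\rhd C)\to A\vee B\rhd C$, $A\rhd B\to(\Diamond A\to\Diamond B)$, $\Diamond A\rhd A$ (with $\Diamond=\neg\Box\neg$), and rules modus ponens and necessitation $A/\Box A$. An $\mathbf{IL}$-frame is $\langle W,R,S\rangle$ with $W\neq\emptyset$, $R$ a transitive Noetherian binary relation (no infinite chains $x_0Rx_1Rx_2\cdots$), $S$ ternary, writing $yS_xz$ for $(x,y,z)\in S$, such that each $S_x$ is a reflexive transitive relation on $\{y: xRy\}$ and $xRyRz$ implies $yS_xz$. $\mathbf{IL}\mathsf{X}$ is $\mathbf{IL}$ plus axiom schemes $\mathsf{X}$; it is a Horn logic if there is a set $\mathcal{C}_{\mathsf X}$ of strict universal Horn sentences $\forall\cdots\forall(\varphi_1\wedge\dots\wedge\varphi_n\to\psi)$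 ($n\ge 0$, $\varphi_i,\psi$ atomic) in the language with binary $R$ and ternary $S$ such that an $\mathbf{IL}$-frame validates all theorems of $\mathbf{IL}\mathsf{X}$ iff it satisfies $\mathcal{C}_{\mathsf X}$. Labels: $0$ is a label; if $\sigma$ is a label and $n\in\mathbb N$, $\sigma Rn$ is a label; if $\sigma,\rho$ are labels with $\rho$ a strict non-empty prefix of $\sigma$, then $\sigma S_\rho n$ is a label. Extended formulas additionally allow unary operators $\Box_\rho$ for labels $\rho$. A labelled formula is $\sigma :: A$. For a set $\Lambda$ of labels, $\mathbf R^\Lambda\subseteq\Lambda^2$, $\mathbf S^\Lambda\subseteq\Lambda^3$ are the least relations such that: (1) $\sigma,\sigma Rn\in\Lambda\Rightarrow \sigma\mathbf R\,\sigma Rn$; (2) $\mathbf R$ transitive; (3) $\sigma,\rho,\sigma S_\rho n\in\Lambda\Rightarrow \sigma\mathbf S_\rho\,\sigma S_\rho n$; (4) $\sigma\mathbf R\tau\Rightarrow\tau\mathbf S_\sigma\tau$; (5) $\rho\mathbf R\sigma\mathbf R\tau\Rightarrow\sigma\mathbf S_\rho\tau$; (6) $\sigma\mathbf S_\rho\tau\mathbf S_\rho\upsilon\Rightarrow\sigma\mathbf S_\rho\upsilon$; (7) $\sigma\mathbf S_\rho\tau\Rightarrow\rho\mathbf R\sigma$ and $\rho\mathbf R\tau$; (8) $\langle\Lambda,\mathbf R^\Lambda,\mathbf S^\Lambda\rangle\models\mathcal C_{\mathsf X}$. Here $\sigma\mathbf S_\rho\tau$ means $(\rho,\sigma,\tau)\in\mathbf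 S^\Lambda$. For a branch $\mathcal B$, $\mathrm{lab}(\mathcal B)$ is the set of labels occurring in it, and relations on it are $\mathbf R^{\mathrm{lab}(\mathcal B)},\mathbf S^{\mathrm{lab}(\mathcal B)}$. A branch is closed if it contains $\sigma::A$ and $\sigma::\neg A$ for some $\sigma,A$, otherwise open. Systematic $\mathbf{IL}\mathsf X$-tableau for finite $\Gamma$: built in stages $T_0\subseteq T_1\subseteq\cdots$ of downward growing trees of labelled formulas, each node marked exactly one of awake, asleep, finished ($\mu(T_i)$ is the marked tree). Stage 0: $T_0$ consists of nodes $0::A$, $A\in\Gamma$, one below the other, all awake. Stage $n+1$: choose an awake node $\sigma::A$ of $\mu(T_n)$ closest to the root (leftmost among equally close). If $A$ is $p$ or $\neg p$ with $p\in\mathsf{Prop}$, mark it finished and stop the stage. Otherwise ("extend $\mathcal B$" = append new nodes at the bottom of $\mathcal B$; all new nodes marked awake): if $A=\neg\neg B$: extend every open branch through the node with $\sigma::B$; mark node finished. If $A=B\to C$: for every open branch through it split its end, left $\sigma::\neg B$, right $\sigma::C$; finished. If $A=\neg(B\to C)$: extend every open branch through it with $\sigma::B,\sigma::\neg C$; finished. If $A=\Box B$: for every open branch $\mathcal B$ through it and every $\tau\in\mathrm{lab}(\mathcal B)$ with $\sigma\mathbf R\tau$, extend $\mathcal B$ with $\tau::B$; mark node asleep. If $A=\neg\Box B$: for every open branch $\mathcal B$ through it, with $n$ least such that $\sigma Rn\notin\mathrm{lab}(\mathcal B)$, extend $\mathcal B$ with $\sigma Rn::\neg B$ and $\sigma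 Rn::\Box B$; mark node finished; moreover mark awake every node $\tau::\Box D$ and $\tau::D\rhd E$ on $\mathcal B$ with $\tau\mathbf R\,\sigma Rn$ and every node $\tau::\Box_\kappa D$ on $\mathcal B$ with $\tau\mathbf S_\kappa\,\sigma Rn$. If $A=\Box_\rho B$: for every branch $\mathcal B$ through it and every $\tau\in\mathrm{lab}(\mathcal B)$ with $\sigma\mathbf S_\rho\tau$, extend with $\tau::B$; asleep. If $A=\neg\Box_\rho B$: for every open branch $\mathcal B$ through it, with $n$ least such that $\sigma S_\rho n\notin\mathrm{lab}(\mathcal B)$, extend with $\sigma S_\rho n::\neg B$, $\sigma S_\rho n::\Box B$; finished; reawaken as in the $\neg\Box$ case with $\sigma S_\rho n$ in place of $\sigma Rn$. If $A=B\rhd C$: for every open branch $\mathcal B$ through it and every $\tau\in\mathrm{lab}(\mathcal B)$ with $\sigma\mathbf R\tau$, split the end, left $\tau::\neg B$, right $\tau::\neg\Box_\sigma\neg C$; asleep. If $A=\neg(B\rhd C)$: for every open branch $\mathcal B$ through it, with $n$ least such that $\sigma Rn\notin\mathrm{lab}(\mathcal B)$, extend with $\sigma Rn::B$, $\sigma Rn::\Box_\sigma\neg C$, $\sigma Rn::\Box\neg B$; finished; reawaken as in the $\neg\Box$ case. The systematic tableau is $\bigcup_i T_i$. *)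

theory Defs
  imports Main
begin

text \<open>Labels: L0 is 0; LR s n is sigma R n; LS s r n is sigma S_rho n (with rho = r).\<close>
datatype label = L0 | LR label nat | LS label label nat

text \<open>Extended formulas over Prop = nat. BoxL r A is the operator Box_rho applied to A.
  The remaining connectives are treated as abbreviations as usual.\<close>
datatype fm = Atom nat | Neg fm | Imp fm fm | Box fm | Rhd fm fm | BoxL label fm

fun plain :: "fm \<Rightarrow> bool" where
  "plain (Atom p) = True"
| "plain (Neg A) = plain A"
| "plain (Imp A B) = (plain A \<and> plain B)"
| "plain (Box A) = plain A"
| "plain (Rhd A B) = (plain A \<and> plain B)"
| "plain (BoxL r A) = False"

text \<open>Atoms with variables from nat. HR x y is R(x,y); HS x y z is S(x,y,z), i.e.
  y S_x z. A strict universal Horn sentence is a pair (premises, conclusion),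
  universally closed over all its variables.\<close>
datatype hatom = HR nat nat | HS nat nat nat
type_synonym hclause = "hatom list \<times> hatom"

text \<open>Facts about labels: FR s t is s R t; FS r s t is s S_r t, i.e. (r,s,t) in S.\<close>
datatype rfact = FR label label | FS label label label

fun inst :: "(nat \<Rightarrow> label) \<Rightarrow> hatom \<Rightarrow> rfact" where
  "inst v (HR x y) = FR (v x) (v y)"
| "inst v (HS x y z) = FS (v x) (v y) (v z)"

inductive rel :: "hclause set \<Rightarrow> label set \<Rightarrow> rfact \<Rightarrow> bool"
  for C :: "hclause set" and \<Lambda> :: "label set" where
  r1: "\<sigma> \<in> \<Lambda> \<Longrightarrow> LR \<sigma> n \<in> \<Lambda> \<Longrightarrow> rel C \<Lambda> (FR \<sigma> (LR \<sigma> n))"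
| r2: "rel C \<Lambda> (FR \<sigma> \<tau>) \<Longrightarrow> rel C \<Lambda> (FR \<tau> \<upsilon>) \<Longrightarrow> rel C \<Lambda> (FR \<sigma> \<upsilon>)"
| r3: "\<sigma> \<in> \<Lambda> \<Longrightarrow> \<rho> \<in> \<Lambda> \<Longrightarrow> LS \<sigma> \<rho> n \<in> \<Lambda> \<Longrightarrow> rel C \<Lambda> (FS \<rho> \<sigma> (LS \<sigma> \<rho> n))"
| r4: "rel C \<Lambda> (FR \<sigma> \<tau>) \<Longrightarrow> rel C \<Lambda> (FS \<sigma> \<tau> \<tau>)"
| r5: "rel C \<Lambda> (FR \<rho> \<sigma>) \<Longrightarrow> rel C \<Lambda> (FR \<sigma> \<tau>) \<Longrightarrow> rel C \<Lambda> (FS \<rho> \<sigma> \<tau>)"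
| r6: "rel C \<Lambda> (FS \<rho> \<sigma> \<tau>) \<Longrightarrow> rel C \<Lambda> (FS \<rho> \<tau> \<upsilon>) \<Longrightarrow> rel C \<Lambda> (FS \<rho> \<sigma> \<upsilon>)"
| r7a: "rel C \<Lambda> (FS \<rho> \<sigma> \<tau>) \<Longrightarrow> rel C \<Lambda> (FR \<rho> \<sigma>)"
| r7b: "rel C \<Lambda> (FS \<rho> \<sigma> \<tau>) \<Longrightarrow> rel C \<Lambda> (FR \<rho> \<tau>)"
| r8: "(ps, c) \<in> C \<Longrightarrow> (\<forall>i. v i \<in> \<Lambda>) \<Longrightarrow> (\<forall>p\<in>set ps. rel C \<Lambda> (inst v p))
        \<Longrightarrow> rel C \<Lambda> (inst v c)"

definition relR :: "hclause set \<Rightarrow> label set \<Rightarrow> label \<Rightarrow> label \<Rightarrow> bool" where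
  "relR C \<Lambda> \<sigma> \<tau> \<longleftrightarrow> rel C \<Lambda> (FR \<sigma> \<tau>)"

text \<open>relS C Lambda rho sigma tau: sigma S_rho tau.\<close>
definition relS :: "hclause set \<Rightarrow> label set \<Rightarrow> label \<Rightarrow> label \<Rightarrow> label \<Rightarrow> bool" where
  "relS C \<Lambda> \<rho> \<sigma> \<tau> \<longleftrightarrow> rel C \<Lambda> (FS \<rho> \<sigma> \<tau>)"

datatype mark = Awake | Asleep | Finished

text \<open>A node is addressed by its path from the root: False = (only or left) child,
  True = right child. A marked tree maps addresses to labelled formulas with marks.\<close>
type_synonym addr = "bool list"
type_synonym node = "label \<times> fm \<times> mark"
type_synonym tree = "addr \<Rightarrow> node option"

definition pref :: "addr \<Rightarrow> addr \<Rightarrow> bool" where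
  "pref a b \<longleftrightarrow> (\<exists>s. b = a @ s)"

definition is_leaf :: "tree \<Rightarrow> addr \<Rightarrow> bool" where
  "is_leaf T l \<longleftrightarrow> T l \<noteq> None \<and> T (l @ [False]) = None \<and> T (l @ [True]) = None"

text \<open>Branches (identified by their end node) through the node at address a.\<close>
definition branches_through :: "tree \<Rightarrow> addr \<Rightarrow> addr set" where
  "branches_through T a = {l. is_leaf T l \<and> pref a l}"

definition lab :: "tree \<Rightarrow> addr \<Rightarrow> label set" where
  "lab T l = {\<sigma>. \<exists>b A m. pref b l \<and> T b = Some (\<sigma>, A, m)}"

definition closed_br :: "tree \<Rightarrow> addr \<Rightarrow> bool" where
  "closed_br T l \<longleftrightarrow> (\<exists>b c \<sigma> A m m'. pref b l \<and> pref c l \<and>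
      T b = Some (\<sigma>, A, m) \<and> T c = Some (\<sigma>, Neg A, m'))"

definition open_branches_through :: "tree \<Rightarrow> addr \<Rightarrow> addr set" where
  "open_branches_through T a = {l \<in> branches_through T a. \<not> closed_br T l}"

fun chain_map :: "addr \<Rightarrow> (label \<times> fm) list \<Rightarrow> tree" where
  "chain_map l [] = Map.empty"
| "chain_map l ((\<sigma>, A) # xs) = (chain_map (l @ [False]) xs)(l @ [False] \<mapsto> (\<sigma>, A, Awake))"

fun split_map :: "addr \<Rightarrow> ((label \<times> fm) \<times> (label \<times> fm)) list \<Rightarrow> tree" where
  "split_map l [] = Map.empty"
| "split_map l (((\<sigma>, A), (\<tau>, B)) # xs) =
     (split_map (l @ [False]) xs ++ split_map (l @ [True]) xs)
       (l @ [False] \<mapsto> (\<sigma>, A, Awake), l @ [True] \<mapsto> (\<tau>, B, Awake))"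

definition add_below :: "tree \<Rightarrow> addr set \<Rightarrow> (addr \<Rightarrow> tree) \<Rightarrow> tree" where
  "add_below T Bs g = (\<lambda>b. if \<exists>l\<in>Bs. g l b \<noteq> None
      then g (SOME l. l \<in> Bs \<and> g l b \<noteq> None) b else T b)"

definition set_mark :: "tree \<Rightarrow> addr \<Rightarrow> mark \<Rightarrow> tree" where
  "set_mark T a m = T(a := map_option (\<lambda>(\<sigma>, A, _). (\<sigma>, A, m)) (T a))"

definition reawake_set :: "hclause set \<Rightarrow> tree \<Rightarrow> addr set \<Rightarrow> (addr \<Rightarrow> label) \<Rightarrow> addr set" where
  "reawake_set C T Bs nu = {b. \<exists>l\<in>Bs. pref b l \<and> (\<exists>\<tau> D m. T b = Some (\<tau>, D, m) \<and>
      ((((\<exists>D'. D = Box D') \<or> (\<exists>D1 D2. D = Rhd D1 D2)) \<and>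
          relR C (insert (nu l) (lab T l)) \<tau> (nu l)) \<or>
       (\<exists>\<kappa> D'. D = BoxL \<kappa> D' \<and> relS C (insert (nu l) (lab T l)) \<kappa> \<tau> (nu l))))}"

definition reawaken :: "tree \<Rightarrow> addr set \<Rightarrow> tree" where
  "reawaken T W = (\<lambda>b. if b \<in> W then map_option (\<lambda>(\<sigma>, A, _). (\<sigma>, A, Awake)) (T b) else T b)"

definition freshR :: "tree \<Rightarrow> addr \<Rightarrow> label \<Rightarrow> label" where
  "freshR T l \<sigma> = LR \<sigma> (LEAST n. LR \<sigma> n \<notin> lab T l)"

definition freshS :: "tree \<Rightarrow> addr \<Rightarrow> label \<Rightarrow> label \<Rightarrow> label" where
  "freshS T l \<sigma> \<rho> = LS \<sigma> \<rho> (LEAST n. LS \<sigma> \<rho> n \<notin> lab T l)"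

text \<open>Enumerations (in any order, without repetition) of the label sets the
  Box / Box_rho / Rhd rules range over, one for each branch in Bs.\<close>
definition enumerates :: "addr set \<Rightarrow> (addr \<Rightarrow> label list) \<Rightarrow> (addr \<Rightarrow> label set) \<Rightarrow> bool" where
  "enumerates Bs e S \<longleftrightarrow> (\<forall>l\<in>Bs. distinct (e l) \<and> set (e l) = S l)"

fun stage_rule :: "hclause set \<Rightarrow> tree \<Rightarrow> addr \<Rightarrow> label \<Rightarrow> fm \<Rightarrow> tree \<Rightarrow> bool" where
  "stage_rule C T a \<sigma> (Atom p) T' = (T' = set_mark T a Finished)"
| "stage_rule C T a \<sigma> (Neg (Atom p)) T' = (T' = set_mark T a Finished)"
| "stage_rule C T a \<sigma> (Neg (Neg B)) T' =
     (T' = set_mark (add_below T (open_branches_through T a) (\<lambda>l. chain_map l [(\<sigma>, B)])) a Finished)"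
| "stage_rule C T a \<sigma> (Imp B D) T' =
     (T' = set_mark (add_below T (open_branches_through T a)
                        (\<lambda>l. split_map l [((\<sigma>, Neg B), (\<sigma>, D))])) a Finished)"
| "stage_rule C T a \<sigma> (Neg (Imp B D)) T' =
     (T' = set_mark (add_below T (open_branches_through T a)
                        (\<lambda>l. chain_map l [(\<sigma>, B), (\<sigma>, Neg D)])) a Finished)"
| "stage_rule C T a \<sigma> (Box B) T' =
     (\<exists>e. enumerates (open_branches_through T a) e (\<lambda>l. {\<tau> \<in> lab T l. relR C (lab T l) \<sigma> \<tau>}) \<and>
        T' = set_mark (add_below T (open_branches_through T a)
                         (\<lambda>l. chain_map l (map (\<lambda>\<tau>. (\<tau>, B)) (e l)))) a Asleep)"
| "stage_rule C T a \<sigma> (Neg (Box B)) T' =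
     (let Bs = open_branches_through T a; nu = (\<lambda>l. freshR T l \<sigma>) in
      T' = reawaken (set_mark (add_below T Bs (\<lambda>l. chain_map l [(nu l, Neg B), (nu l, Box B)])) a Finished)
                    (reawake_set C T Bs nu))"
| "stage_rule C T a \<sigma> (BoxL \<rho> B) T' =
     (\<exists>e. enumerates (branches_through T a) e (\<lambda>l. {\<tau> \<in> lab T l. relS C (lab T l) \<rho> \<sigma> \<tau>}) \<and>
        T' = set_mark (add_below T (branches_through T a)
                         (\<lambda>l. chain_map l (map (\<lambda>\<tau>. (\<tau>, B)) (e l)))) a Asleep)"
| "stage_rule C T a \<sigma> (Neg (BoxL \<rho> B)) T' =
     (let Bs = open_branches_through T a; nu = (\<lambda>l. freshS T l \<sigma> \<rho>) in
      T' = reawaken (set_mark (add_below T Bs (\<lambda>l. chain_map l [(nu l, Neg B), (nu l, Box B)])) a Finished)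
                    (reawake_set C T Bs nu))"
| "stage_rule C T a \<sigma> (Rhd B D) T' =
     (\<exists>e. enumerates (open_branches_through T a) e (\<lambda>l. {\<tau> \<in> lab T l. relR C (lab T l) \<sigma> \<tau>}) \<and>
        T' = set_mark (add_below T (open_branches_through T a)
               (\<lambda>l. split_map l (map (\<lambda>\<tau>. ((\<tau>, Neg B), (\<tau>, Neg (BoxL \<sigma> (Neg D))))) (e l)))) a Asleep)"
| "stage_rule C T a \<sigma> (Neg (Rhd B D)) T' =
     (let Bs = open_branches_through T a; nu = (\<lambda>l. freshR T l \<sigma>) in
      T' = reawaken (set_mark (add_below T Bs
              (\<lambda>l. chain_map l [(nu l, B), (nu l, BoxL \<sigma> (Neg D)), (nu l, Box (Neg B))])) a Finished)
                    (reawake_set C T Bs nu))"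

text \<open>a is strictly to the left of b (same depth assumed).\<close>
definition left_of :: "addr \<Rightarrow> addr \<Rightarrow> bool" where
  "left_of a b \<longleftrightarrow> (\<exists>p x y. a = p @ [False] @ x \<and> b = p @ [True] @ y)"

definition selected :: "tree \<Rightarrow> addr \<Rightarrow> bool" where
  "selected T a \<longleftrightarrow> (\<exists>\<sigma> A. T a = Some (\<sigma>, A, Awake)) \<and>
     (\<forall>b \<sigma> A. T b = Some (\<sigma>, A, Awake) \<and> b \<noteq> a \<longrightarrow>
        length a < length b \<or> (length a = length b \<and> left_of a b))"

definition step :: "hclause set \<Rightarrow> tree \<Rightarrow> tree \<Rightarrow> bool" where
  "step C T T' \<longleftrightarrow>
     ((\<nexists>a. selected T a) \<and> T' = T) \<or>
     (\<exists>a \<sigma> A. selected T a \<and> T a = Some (\<sigma>, A, Awake) \<and> stage_rule C T a \<sigma> A T')"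

fun init_tree :: "fm list \<Rightarrow> tree" where
  "init_tree [] = Map.empty"
| "init_tree (A # As) = (chain_map [] (map (\<lambda>B. (L0, B)) As))([] \<mapsto> (L0, A, Awake))"

definition tableau_run :: "hclause set \<Rightarrow> fm list \<Rightarrow> (nat \<Rightarrow> tree) \<Rightarrow> bool" where
  "tableau_run C Gs T \<longleftrightarrow> T 0 = init_tree Gs \<and> (\<forall>i. step C (T i) (T (Suc i)))"

end

theory Submission
  imports Defs
begin

definition dc :: "tree \<Rightarrow> bool" where
  "dc T \<longleftrightarrow> (\<forall>b x. T (b @ [x]) \<noteq> None \<longrightarrow> T b \<noteq> None)"

definition boxy :: "fm \<Rightarrow> bool" where
  "boxy D \<longleftrightarrow> (\<exists>D'. D = Box D') \<or> (\<exists>D1 D2. D = Rhd D1 D2) \<or> (\<exists>k D'. D = BoxL k D')"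

definition nobf :: "tree \<Rightarrow> bool" where
  "nobf T \<longleftrightarrow> (\<forall>b \<tau> D. T b = Some (\<tau>, D, Finished) \<longrightarrow> \<not> boxy D)"

definition good :: "addr \<Rightarrow> tree \<Rightarrow> bool" where
  "good l M \<longleftrightarrow> (\<forall>b. M b \<noteq> None \<longrightarrow> (\<exists>y s. b = l @ y # s) \<and> (\<exists>\<sigma> A. M b = Some (\<sigma>, A, Awake)))
     \<and> (\<forall>b x. M (b @ [x]) \<noteq> None \<longrightarrow> b = l \<or> M b \<noteq> None)"

definition extd :: "tree \<Rightarrow> tree \<Rightarrow> bool" where
  "extd T E \<longleftrightarrow> (\<forall>b. T b \<noteq> None \<longrightarrow> E b = T b) \<and>
     (\<forall>b. E b \<noteq> None \<longrightarrow> T b \<noteq> None \<or> (\<exists>\<sigma> A. E b = Some (\<sigma>, A, Awake))) \<and> dc E"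

lemma good_chain: "good l (chain_map l xs)"
proof (induction xs arbitrary: l)
  case Nil
  show ?case by (simp add: good_def)
next
  case (Cons p xs)
  obtain \<sigma> A where p: "p = (\<sigma>, A)" by fastforce
  have IH: "good (l @ [False]) (chain_map (l @ [False]) xs)" by (rule Cons.IH)
  show ?case
    unfolding p good_def
  proof (rule conjI; intro allI impI)
    fix b assume "(chain_map l ((\<sigma>, A) # xs)) b \<noteq> None"
    then show "(\<exists>y s. b = l @ y # s) \<and> (\<exists>x y. chain_map l ((\<sigma>, A) # xs) b = Some (x, y, Awake))"
      using IH unfolding good_def by (cases "b = l @ [False]") force+
  next
    fix b x assume h: "(chain_map l ((\<sigma>, A) # xs)) (b @ [x]) \<noteq> None"
    show "b = l \<or> chain_map l ((\<sigma>, A) # xs) b \<noteq> None"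
    proof (cases "b @ [x] = l @ [False]")
      case True then show ?thesis by simp
    next
      case False
      have "chain_map l ((\<sigma>, A) # xs) (b @ [x]) = chain_map (l @ [False]) xs (b @ [x])"
        by (simp only: chain_map.simps fun_upd_apply if_not_P[OF False])
      then have "chain_map (l @ [False]) xs (b @ [x]) \<noteq> None" using h by simp
      then have "b = l @ [False] \<or> chain_map (l @ [False]) xs b \<noteq> None" using IH unfolding good_def by blast
      then show ?thesis by auto
    qed
  qed
qed

lemma good_node:
  assumes gL: "good (l @ [False]) L" and gR: "good (l @ [True]) R"
  shows "good l ((L ++ R)(l @ [False] \<mapsto> (\<sigma>, A, Awake), l @ [True] \<mapsto> (\<tau>, B, Awake)))"
proof -
  let ?M = "(L ++ R)(l @ [False] \<mapsto> (\<sigma>, A, Awake), l @ [True] \<mapsto> (\<tau>, B, Awake))"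
  have MN: "?M b = None \<longleftrightarrow> (b \<noteq> l @ [False] \<and> b \<noteq> l @ [True] \<and> L b = None \<and> R b = None)" for b
    by auto
  have MS: "(b = l @ [False] \<and> v = (\<sigma>, A, Awake)) \<or> (b = l @ [True] \<and> v = (\<tau>, B, Awake)) \<or> L b = Some v \<or> R b = Some v"
    if "?M b = Some v" for b v
    using that by (auto simp: map_add_Some_iff split: if_split_asm)
  show ?thesis
    unfolding good_def
  proof (rule conjI; intro allI impI)
    fix b assume "?M b \<noteq> None"
    then obtain v where v: "?M b = Some v" by blast
    from MS[OF v] show "(\<exists>y s. b = l @ y # s) \<and> (\<exists>x y. ?M b = Some (x, y, Awake))"
    proof (elim disjE conjE)
      assume "L b = Some v"
      then have "(\<exists>y s. b = (l @ [False]) @ y # s) \<and> (\<exists>x y. L b = Some (x, y, Awake))"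
        using gL unfolding good_def by blast
      then show ?thesis using v \<open>L b = Some v\<close> by auto
    next
      assume "R b = Some v"
      then have "(\<exists>y s. b = (l @ [True]) @ y # s) \<and> (\<exists>x y. R b = Some (x, y, Awake))"
        using gR unfolding good_def by blast
      then show ?thesis using v \<open>R b = Some v\<close> by auto
    qed (use v in auto)
  next
    fix b x assume "?M (b @ [x]) \<noteq> None"
    then have "b @ [x] = l @ [False] \<or> b @ [x] = l @ [True] \<or> L (b @ [x]) \<noteq> None \<or> R (b @ [x]) \<noteq> None"
      using MN[of "b @ [x]"] by metis
    then show "b = l \<or> ?M b \<noteq> None"
    proof (elim disjE)
      assume "L (b @ [x]) \<noteq> None"
      then have "b = l @ [False] \<or> L b \<noteq> None" using gL unfolding good_def by blast
      then show ?thesis using MN[of b] by metis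
    next
      assume "R (b @ [x]) \<noteq> None"
      then have "b = l @ [True] \<or> R b \<noteq> None" using gR unfolding good_def by blast
      then show ?thesis using MN[of b] by metis
    qed auto
  qed
qed

lemma good_split: "good l (split_map l ps)"
proof (induction l ps rule: split_map.induct)
  case (1 l)
  then show ?case by (simp add: good_def)
next
  case (2 l \<sigma> A \<tau> B xs)
  then show ?case by (simp only: split_map.simps) (rule good_node)
qed

declare chain_map.simps[simp del] split_map.simps[simp del]

lemma dc_none: "dc T \<Longrightarrow> T (l @ [y]) = None \<Longrightarrow> T (l @ [y] @ s) = None"
proof (induction s rule: rev_induct)
  case Nil then show ?case by simp
next
  case (snoc x s)
  then show ?case unfolding dc_def by (metis append_assoc)
qed

lemma branches_leaf: "branches_through T a \<subseteq> {l. is_leaf T l}"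
  by (auto simp: branches_through_def)

lemma open_leaf: "open_branches_through T a \<subseteq> {l. is_leaf T l}"
  by (auto simp: open_branches_through_def branches_through_def)

lemma ab_extd:
  assumes dcT: "dc T" and lv: "Bs \<subseteq> {l. is_leaf T l}" and gd: "\<And>l. l \<in> Bs \<Longrightarrow> good l (g l)"
  shows "extd T (add_below T Bs g)"
proof -
  let ?E = "add_below T Bs g"
  have new_none: "T b = None" if "l \<in> Bs" "g l b \<noteq> None" for l b
  proof -
    from gd[OF that(1)] that(2) obtain y s where "b = l @ y # s" unfolding good_def by blast
    moreover have "T (l @ [y]) = None" using lv that(1) unfolding is_leaf_def by (cases y) auto
    ultimately show ?thesis using dc_none[OF dcT, of l y s] by simp
  qed
  have old: "?E b = T b" if "T b \<noteq> None" for b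
  proof -
    have "\<not> (\<exists>l\<in>Bs. g l b \<noteq> None)" using that new_none by metis
    then show ?thesis by (simp add: add_below_def)
  qed
  have newv: "T b \<noteq> None \<or> (\<exists>\<sigma> A. ?E b = Some (\<sigma>, A, Awake))" if "?E b \<noteq> None" for b
  proof (cases "\<exists>l\<in>Bs. g l b \<noteq> None")
    case True
    let ?l = "SOME l. l \<in> Bs \<and> g l b \<noteq> None"
    have "?l \<in> Bs \<and> g ?l b \<noteq> None" using True someI_ex[of "\<lambda>l. l \<in> Bs \<and> g l b \<noteq> None"] by blast
    then have "\<exists>\<sigma> A. g ?l b = Some (\<sigma>, A, Awake)" using gd unfolding good_def by blast
    then show ?thesis using True unfolding add_below_def by simp
  next
    case False
    then show ?thesis using that unfolding add_below_def by simp
  qed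
  have Enn: "?E b \<noteq> None" if "l \<in> Bs" "g l b \<noteq> None" for l b
  proof -
    let ?l = "SOME l. l \<in> Bs \<and> g l b \<noteq> None"
    have "?l \<in> Bs \<and> g ?l b \<noteq> None" using that someI_ex[of "\<lambda>l. l \<in> Bs \<and> g l b \<noteq> None"] by blast
    then show ?thesis using that unfolding add_below_def by auto
  qed
  have "dc ?E"
    unfolding dc_def
  proof (intro allI impI)
    fix b x assume h: "?E (b @ [x]) \<noteq> None"
    show "?E b \<noteq> None"
    proof (cases "\<exists>l\<in>Bs. g l (b @ [x]) \<noteq> None")
      case True
      then obtain l where l: "l \<in> Bs" "g l (b @ [x]) \<noteq> None" by blast
      then have "b = l \<or> g l b \<noteq> None" using gd unfolding good_def by blast
      then show ?thesis
      proof
        assume "b = l"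
        then have "T b \<noteq> None" using lv l(1) unfolding is_leaf_def by auto
        then show ?thesis using old by simp
      qed (use Enn l in auto)
    next
      case False
      then have "T (b @ [x]) \<noteq> None" using h unfolding add_below_def by simp
      then have "T b \<noteq> None" using dcT unfolding dc_def by blast
      then show ?thesis using old by simp
    qed
  qed
  then show ?thesis unfolding extd_def using old newv by blast
qed

lemma reawaken_empty: "reawaken T {} = T"
  by (rule ext) (simp add: reawaken_def)

lemma extd_refl: "dc T \<Longrightarrow> extd T T"
  by (simp add: extd_def)

lemma shape_intro:
  assumes "T' = reawaken (set_mark E p m) W" "extd T E" "\<forall>b\<in>W. \<exists>\<tau> D mk. T b = Some (\<tau>, D, mk) \<and> boxy D"
    "m = Finished \<and> \<not> boxy A \<or> m = Asleep \<and> W = {}"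
  shows "\<exists>E W m. extd T E \<and> T' = reawaken (set_mark E p m) W \<and>
    (\<forall>b\<in>W. \<exists>\<tau> D mk. T b = Some (\<tau>, D, mk) \<and> boxy D) \<and>
    (m = Finished \<and> \<not> boxy A \<or> m = Asleep \<and> W = {})"
  using assms by blast

lemma stage_shape:
  assumes dcT: "dc T" and sr: "stage_rule C T p \<sigma> A T'"
  shows "\<exists>E W m. extd T E \<and> T' = reawaken (set_mark E p m) W \<and>
    (\<forall>b\<in>W. \<exists>\<tau> D mk. T b = Some (\<tau>, D, mk) \<and> boxy D) \<and>
    (m = Finished \<and> \<not> boxy A \<or> m = Asleep \<and> W = {})"
proof -
  have ob: "extd T (add_below T (open_branches_through T p) (\<lambda>l. chain_map l (xs l)))" for xs
    by (rule ab_extd[OF dcT open_leaf]) (rule good_chain)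
  have ob2: "extd T (add_below T (open_branches_through T p) (\<lambda>l. split_map l (xs l)))" for xs
    by (rule ab_extd[OF dcT open_leaf]) (rule good_split)
  have bb: "extd T (add_below T (branches_through T p) (\<lambda>l. chain_map l (xs l)))" for xs
    by (rule ab_extd[OF dcT branches_leaf]) (rule good_chain)
  have rw: "\<forall>b\<in>reawake_set C T Bs nu. \<exists>\<tau> D mk. T b = Some (\<tau>, D, mk) \<and> boxy D" for Bs nu
    unfolding reawake_set_def boxy_def by blast
  have T0: "extd T T" using dcT by (rule extd_refl)
  show ?thesis
  proof (cases A)
    case (Atom x)
    have "T' = reawaken (set_mark T p Finished) {}" using sr Atom by (simp add: reawaken_empty)
    then show ?thesis by (rule shape_intro) (auto simp: boxy_def Atom T0)
  next
    case (Imp B D)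
    have "T' = reawaken (set_mark (add_below T (open_branches_through T p) (\<lambda>l. split_map l [((\<sigma>, Neg B), (\<sigma>, D))])) p Finished) {}"
      using sr Imp by (simp add: reawaken_empty)
    then show ?thesis by (rule shape_intro) (auto simp: boxy_def Imp intro: ob2)
  next
    case (Box B)
    from sr Box obtain e where "T' = set_mark (add_below T (open_branches_through T p) (\<lambda>l. chain_map l (map (\<lambda>\<tau>. (\<tau>, B)) (e l)))) p Asleep"
      by auto
    then have "T' = reawaken (set_mark (add_below T (open_branches_through T p) (\<lambda>l. chain_map l (map (\<lambda>\<tau>. (\<tau>, B)) (e l)))) p Asleep) {}"
      by (simp add: reawaken_empty)
    then show ?thesis by (rule shape_intro) (auto intro: ob)
  next
    case (Rhd B D)
    from sr Rhd obtain e where "T' = set_mark (add_below T (open_branches_through T p)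
               (\<lambda>l. split_map l (map (\<lambda>\<tau>. ((\<tau>, Neg B), (\<tau>, Neg (BoxL \<sigma> (Neg D))))) (e l)))) p Asleep"
      by auto
    then have "T' = reawaken (set_mark (add_below T (open_branches_through T p)
               (\<lambda>l. split_map l (map (\<lambda>\<tau>. ((\<tau>, Neg B), (\<tau>, Neg (BoxL \<sigma> (Neg D))))) (e l)))) p Asleep) {}"
      by (simp add: reawaken_empty)
    then show ?thesis by (rule shape_intro) (auto intro: ob2)
  next
    case (BoxL r B)
    from sr BoxL obtain e where "T' = set_mark (add_below T (branches_through T p) (\<lambda>l. chain_map l (map (\<lambda>\<tau>. (\<tau>, B)) (e l)))) p Asleep"
      by auto
    then have "T' = reawaken (set_mark (add_below T (branches_through T p) (\<lambda>l. chain_map l (map (\<lambda>\<tau>. (\<tau>, B)) (e l)))) p Asleep) {}"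
      by (simp add: reawaken_empty)
    then show ?thesis by (rule shape_intro) (auto intro: bb)
  next
    case (Neg F)
    show ?thesis
    proof (cases F)
      case (Atom x)
      have "T' = reawaken (set_mark T p Finished) {}" using sr Atom Neg by (simp add: reawaken_empty)
      then show ?thesis by (rule shape_intro) (auto simp: boxy_def Atom Neg T0)
    next
      case (Neg B)
      have "T' = reawaken (set_mark (add_below T (open_branches_through T p) (\<lambda>l. chain_map l [(\<sigma>, B)])) p Finished) {}"
        using sr Neg \<open>A = Neg F\<close> by (simp add: reawaken_empty)
      then show ?thesis by (rule shape_intro) (auto simp: boxy_def Neg \<open>A = Neg F\<close> intro: ob)
    next
      case (Imp B D)
      have "T' = reawaken (set_mark (add_below T (open_branches_through T p) (\<lambda>l. chain_map l [(\<sigma>, B), (\<sigma>, Neg D)])) p Finished) {}"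
        using sr Imp \<open>A = Neg F\<close> by (simp add: reawaken_empty)
      then show ?thesis by (rule shape_intro) (auto simp: boxy_def Imp \<open>A = Neg F\<close> intro: ob)
    next
      case (Box B)
      let ?Bs = "open_branches_through T p" and ?nu = "\<lambda>l. freshR T l \<sigma>"
      have "T' = reawaken (set_mark (add_below T ?Bs (\<lambda>l. chain_map l [(?nu l, Neg B), (?nu l, Box B)])) p Finished)
                    (reawake_set C T ?Bs ?nu)"
        using sr Box \<open>A = Neg F\<close> by (simp add: Let_def)
      then show ?thesis by (rule shape_intro) (rule ob, rule rw, simp add: boxy_def Box \<open>A = Neg F\<close>)
    next
      case (Rhd B D)
      let ?Bs = "open_branches_through T p" and ?nu = "\<lambda>l. freshR T l \<sigma>"
      have "T' = reawaken (set_mark (add_below T ?Bs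
              (\<lambda>l. chain_map l [(?nu l, B), (?nu l, BoxL \<sigma> (Neg D)), (?nu l, Box (Neg B))])) p Finished)
                    (reawake_set C T ?Bs ?nu)"
        using sr Rhd \<open>A = Neg F\<close> by (simp add: Let_def)
      then show ?thesis by (rule shape_intro) (rule ob, rule rw, simp add: boxy_def Rhd \<open>A = Neg F\<close>)
    next
      case (BoxL r B)
      let ?Bs = "open_branches_through T p" and ?nu = "\<lambda>l. freshS T l \<sigma> r"
      have "T' = reawaken (set_mark (add_below T ?Bs (\<lambda>l. chain_map l [(?nu l, Neg B), (?nu l, Box B)])) p Finished)
                    (reawake_set C T ?Bs ?nu)"
        using sr BoxL \<open>A = Neg F\<close> by (simp add: Let_def)
      then show ?thesis by (rule shape_intro) (rule ob, rule rw, simp add: boxy_def BoxL \<open>A = Neg F\<close>)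
    qed
  qed
qed

definition fin :: "tree \<Rightarrow> addr \<Rightarrow> bool" where
  "fin T b \<longleftrightarrow> (\<exists>\<sigma> A. T b = Some (\<sigma>, A, Finished))"

definition aw :: "tree \<Rightarrow> addr \<Rightarrow> bool" where
  "aw T b \<longleftrightarrow> (\<exists>\<sigma> A. T b = Some (\<sigma>, A, Awake))"

lemma set_mark_app: "set_mark X a m b = (if b = a then map_option (\<lambda>(\<sigma>, A, _). (\<sigma>, A, m)) (X a) else X b)"
  by (simp add: set_mark_def)

lemma reawaken_app: "reawaken X W b = (if b \<in> W then map_option (\<lambda>(\<sigma>, A, _). (\<sigma>, A, Awake)) (X b) else X b)"
  by (simp add: reawaken_def)

lemma step_facts:
  assumes dcT: "dc T" and nb: "nobf T" and Tp: "T p = Some (\<sigma>, A, Awake)" and sr: "stage_rule C T p \<sigma> A T'"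
  shows "dc T' \<and> nobf T' \<and> (\<forall>b. T b \<noteq> None \<longrightarrow> T' b \<noteq> None) \<and> (\<forall>b. fin T b \<longrightarrow> fin T' b)
    \<and> (\<forall>b. b \<noteq> p \<longrightarrow> aw T b \<longrightarrow> aw T' b)
    \<and> (T' p = Some (\<sigma>, A, Finished) \<or>
       (T' p = Some (\<sigma>, A, Asleep) \<and> (\<forall>b. b \<noteq> p \<longrightarrow> aw T' b \<longrightarrow> T b = None \<or> aw T b)))"
proof -
  obtain E W m where ex: "extd T E" and T': "T' = reawaken (set_mark E p m) W"
    and Wb: "\<forall>b\<in>W. \<exists>\<tau> D mk. T b = Some (\<tau>, D, mk) \<and> boxy D"
    and mc: "m = Finished \<and> \<not> boxy A \<or> m = Asleep \<and> W = {}"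
    using stage_shape[OF dcT sr] by blast
  have Eold: "T b \<noteq> None \<Longrightarrow> E b = T b" for b using ex unfolding extd_def by blast
  have Enew: "E b \<noteq> None \<Longrightarrow> T b \<noteq> None \<or> (\<exists>\<sigma> A. E b = Some (\<sigma>, A, Awake))" for b
    using ex unfolding extd_def by blast
  have dcE: "dc E" using ex unfolding extd_def by blast
  have Ep: "E p = T p" using Eold Tp by simp
  have T'b: "T' b = (if b \<in> W then map_option (\<lambda>(\<sigma>, A, _). (\<sigma>, A, Awake)) (if b = p then Some (\<sigma>, A, m) else E b)
      else (if b = p then Some (\<sigma>, A, m) else E b))" for b
    unfolding T' reawaken_app set_mark_app using Ep Tp by simp
  have nn: "(T' b \<noteq> None) = (E b \<noteq> None)" for b
    using T'b[of b] Ep Tp by auto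
  have pW: "m = Finished \<Longrightarrow> p \<notin> W" using Wb Tp mc by auto
  have "dc T'" using dcE nn unfolding dc_def by blast
  moreover have "nobf T'"
    unfolding nobf_def
  proof (intro allI impI)
    fix b \<tau> D assume h: "T' b = Some (\<tau>, D, Finished)"
    then have bW: "b \<notin> W" using T'b[of b] by (auto split: if_splits)
    show "\<not> boxy D"
    proof (cases "b = p")
      case True
      then show ?thesis using h bW T'b[of b] mc by (auto split: if_splits)
    next
      case False
      then have Eb: "E b = Some (\<tau>, D, Finished)" using h bW T'b[of b] by simp
      then have "T b \<noteq> None" using Enew[of b] by auto
      then have "T b = Some (\<tau>, D, Finished)" using Eold Eb by simp
      then show ?thesis using nb unfolding nobf_def by blast
    qed
  qed
  moreover have "\<forall>b. T b \<noteq> None \<longrightarrow> T' b \<noteq> None" using nn Eold by simp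
  moreover have "\<forall>b. fin T b \<longrightarrow> fin T' b"
  proof (intro allI impI)
    fix b assume "fin T b"
    then obtain \<tau> D where Tb: "T b = Some (\<tau>, D, Finished)" unfolding fin_def by blast
    then have "b \<noteq> p" using Tp by auto
    moreover have "b \<notin> W" using Wb Tb nb unfolding nobf_def by fastforce
    ultimately have "T' b = T b" using T'b[of b] Eold Tb by simp
    then show "fin T' b" using Tb unfolding fin_def by simp
  qed
  moreover have "\<forall>b. b \<noteq> p \<longrightarrow> aw T b \<longrightarrow> aw T' b"
  proof (intro allI impI)
    fix b assume "b \<noteq> p" "aw T b"
    then obtain \<tau> D where Tb: "T b = Some (\<tau>, D, Awake)" unfolding aw_def by blast
    then have "E b = T b" using Eold by simp
    then show "aw T' b" using T'b[of b] Tb \<open>b \<noteq> p\<close> unfolding aw_def by auto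
  qed
  moreover have "T' p = Some (\<sigma>, A, Finished) \<or>
       (T' p = Some (\<sigma>, A, Asleep) \<and> (\<forall>b. b \<noteq> p \<longrightarrow> aw T' b \<longrightarrow> T b = None \<or> aw T b))"
    using mc
  proof
    assume "m = Finished \<and> \<not> boxy A"
    then show ?thesis using pW T'b[of p] by simp
  next
    assume mA: "m = Asleep \<and> W = {}"
    have "\<forall>b. b \<noteq> p \<longrightarrow> aw T' b \<longrightarrow> T b = None \<or> aw T b"
    proof (intro allI impI)
      fix b assume "b \<noteq> p" "aw T' b"
      then have "aw E b" using T'b[of b] mA unfolding aw_def by simp
      then show "T b = None \<or> aw T b" using Eold[of b] unfolding aw_def by auto
    qed
    then show ?thesis using mA T'b[of p] by simp
  qed
  ultimately show ?thesis by blast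
qed

lemma lmin: "S \<noteq> {} \<Longrightarrow> \<forall>b\<in>S. length b = k \<Longrightarrow> \<exists>m\<in>S. \<forall>b\<in>S. b \<noteq> m \<longrightarrow> left_of m b"
proof (induction k arbitrary: S)
  case 0
  then have "S = {[]}" by auto
  then show ?case by simp
next
  case (Suc k)
  show ?case
  proof (cases "\<exists>t. False # t \<in> S")
    case True
    let ?S0 = "{t. False # t \<in> S}"
    have "?S0 \<noteq> {}" using True by auto
    moreover have "\<forall>b\<in>?S0. length b = k" using Suc.prems by auto
    ultimately obtain m0 where m0: "m0 \<in> ?S0" "\<forall>b\<in>?S0. b \<noteq> m0 \<longrightarrow> left_of m0 b" using Suc.IH[of "?S0"] by blast
    have "\<forall>b\<in>S. b \<noteq> False # m0 \<longrightarrow> left_of (False # m0) b"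
    proof (intro ballI impI)
      fix b assume b: "b \<in> S" "b \<noteq> False # m0"
      then obtain c t where bc: "b = c # t" using Suc.prems by (cases b) auto
      show "left_of (False # m0) b"
      proof (cases c)
        case True
        then show ?thesis unfolding bc left_of_def by (intro exI[where x="[]"] exI[where x=m0] exI[where x=t]) simp
      next
        case False
        then have "t \<in> ?S0" "t \<noteq> m0" using b bc by auto
        then have "left_of m0 t" using m0 by blast
        then obtain p x y where "m0 = p @ [False] @ x" "t = p @ [True] @ y" unfolding left_of_def by blast
        then show ?thesis unfolding bc left_of_def using False by (intro exI[where x="False # p"] exI[where x=x] exI[where x=y]) simp
      qed
    qed
    then show ?thesis using m0 by blast
  next
    case False
    let ?S1 = "{t. True # t \<in> S}"
    have all: "\<forall>b\<in>S. \<exists>t. b = True # t"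
    proof
      fix b assume "b \<in> S"
      then obtain c t where "b = c # t" using Suc.prems by (cases b) auto
      then show "\<exists>t. b = True # t" using False \<open>b \<in> S\<close> by (cases c) auto
    qed
    have "?S1 \<noteq> {}" using Suc.prems all by auto
    moreover have "\<forall>b\<in>?S1. length b = k" using Suc.prems by auto
    ultimately obtain m1 where m1: "m1 \<in> ?S1" "\<forall>b\<in>?S1. b \<noteq> m1 \<longrightarrow> left_of m1 b" using Suc.IH[of "?S1"] by blast
    have "\<forall>b\<in>S. b \<noteq> True # m1 \<longrightarrow> left_of (True # m1) b"
    proof (intro ballI impI)
      fix b assume b: "b \<in> S" "b \<noteq> True # m1"
      then obtain t where bc: "b = True # t" using all by blast
      then have "t \<in> ?S1" "t \<noteq> m1" using b by auto
      then have "left_of m1 t" using m1 by blast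
      then obtain p x y where "m1 = p @ [False] @ x" "t = p @ [True] @ y" unfolding left_of_def by blast
      then show "left_of (True # m1) b" unfolding bc left_of_def by (intro exI[where x="True # p"] exI[where x=x] exI[where x=y]) simp
    qed
    then show ?thesis using m1 by blast
  qed
qed

lemma ex_sel:
  assumes "aw T a" shows "\<exists>p. selected T p"
proof -
  let ?k = "LEAST k. \<exists>b. aw T b \<and> length b = k"
  have ek: "\<exists>b. aw T b \<and> length b = ?k" by (rule LeastI[where k="length a"]) (use assms in auto)
  have kmin: "?k \<le> length b" if "aw T b" for b using that by (intro Least_le) auto
  let ?S = "{b. aw T b \<and> length b = ?k}"
  obtain m where m: "m \<in> ?S" "\<forall>b\<in>?S. b \<noteq> m \<longrightarrow> left_of m b"
    using lmin[of ?S ?k] ek by blast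
  have "selected T m"
    unfolding selected_def
  proof (intro conjI allI impI)
    show "\<exists>\<sigma> A. T m = Some (\<sigma>, A, Awake)" using m unfolding aw_def by blast
  next
    fix b \<sigma> A assume h: "T b = Some (\<sigma>, A, Awake) \<and> b \<noteq> m"
    then have "aw T b" unfolding aw_def by blast
    then have "?k \<le> length b" by (rule kmin)
    then show "length m < length b \<or> length m = length b \<and> left_of m b"
      using m h \<open>aw T b\<close> by (cases "length b = ?k") auto
  qed
  then show ?thesis by blast
qed

definition Pa :: "addr \<Rightarrow> addr set" where
  "Pa a = {b. length b < length a \<or> (length b = length a \<and> left_of b a)}"

lemma finite_Pa: "finite (Pa a)"
proof -
  have "Pa a \<subseteq> {xs. set xs \<subseteq> (UNIV :: bool set) \<and> length xs \<le> length a}" unfolding Pa_def by auto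
  moreover have "finite {xs. set xs \<subseteq> (UNIV :: bool set) \<and> length xs \<le> length a}"
    by (rule finite_lists_length_le) simp
  ultimately show ?thesis by (rule finite_subset)
qed

definition mu :: "addr \<Rightarrow> tree \<Rightarrow> nat \<times> nat \<times> nat" where
  "mu a T = (card {b \<in> Pa a. \<not> fin T b}, card {b \<in> Pa a. T b = None}, card {b \<in> Pa a. aw T b})"

definition RR :: "((nat \<times> nat \<times> nat) \<times> (nat \<times> nat \<times> nat)) set" where
  "RR = less_than <*lex*> (less_than <*lex*> less_than)"

lemma wf_RR: "wf RR" unfolding RR_def by (intro wf_lex_prod wf_less_than)

lemma step_inv:
  assumes "dc T" "nobf T" "step C T T'" shows "dc T' \<and> nobf T'"
  using assms step_facts unfolding step_def by blast

lemma measure_step: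
  assumes dcT: "dc T" and nb: "nobf T" and awa: "aw T a" and st: "step C T T'" and ns: "\<not> selected T a"
  shows "aw T' a \<and> (mu a T', mu a T) \<in> RR"
proof -
  obtain p where "selected T p" using ex_sel[OF awa] by blast
  then obtain p \<sigma> A where sel: "selected T p" and Tp: "T p = Some (\<sigma>, A, Awake)" and sr: "stage_rule C T p \<sigma> A T'"
    using st unfolding step_def by blast
  have pa: "p \<noteq> a" using sel ns by blast
  obtain \<sigma>a Aa where Ta: "T a = Some (\<sigma>a, Aa, Awake)" using awa unfolding aw_def by blast
  have sall: "\<forall>b \<sigma> A. T b = Some (\<sigma>, A, Awake) \<and> b \<noteq> p \<longrightarrow>
        length p < length b \<or> (length p = length b \<and> left_of p b)" using sel unfolding selected_def by (rule conjunct2)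
  have "a \<noteq> p" using pa by simp
  then have "length p < length a \<or> (length p = length a \<and> left_of p a)"
    using sall[rule_format, of a \<sigma>a Aa] Ta by simp
  then have pP: "p \<in> Pa a" unfolding Pa_def by simp
  note F = step_facts[OF dcT nb Tp sr]
  note F3 = F[THEN conjunct2, THEN conjunct2, THEN conjunct1]
  note F4 = F[THEN conjunct2, THEN conjunct2, THEN conjunct2, THEN conjunct1]
  note F5 = F[THEN conjunct2, THEN conjunct2, THEN conjunct2, THEN conjunct2, THEN conjunct1]
  note F6 = F[THEN conjunct2, THEN conjunct2, THEN conjunct2, THEN conjunct2, THEN conjunct2]
  have awa': "aw T' a" using F5[rule_format, OF \<open>a \<noteq> p\<close> awa] .
  let ?N = "{b \<in> Pa a. \<not> fin T b}" and ?N' = "{b \<in> Pa a. \<not> fin T' b}"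
  let ?M = "{b \<in> Pa a. T b = None}" and ?M' = "{b \<in> Pa a. T' b = None}"
  let ?W = "{b \<in> Pa a. aw T b}" and ?W' = "{b \<in> Pa a. aw T' b}"
  have fN: "finite ?N" "finite ?M" "finite ?W" using finite_Pa by auto
  have NN: "?N' \<subseteq> ?N" using F4 by blast
  have MM: "?M' \<subseteq> ?M" using F3 by blast
  have pN: "p \<in> ?N" using pP Tp unfolding fin_def by auto
  have c1: "card ?N' \<le> card ?N" using NN fN by (intro card_mono) auto
  have c2: "card ?M' \<le> card ?M" using MM fN by (intro card_mono) auto
  have "card ?N' < card ?N \<or> (card ?N' = card ?N \<and> (card ?M' < card ?M \<or> (card ?M' = card ?M \<and> card ?W' < card ?W)))"
    using F6
  proof (elim disjE conjE)
    assume "T' p = Some (\<sigma>, A, Finished)"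
    then have "p \<notin> ?N'" unfolding fin_def by auto
    then have "?N' \<subset> ?N" using NN pN by blast
    then show ?thesis using fN by (simp add: psubset_card_mono)
  next
    assume Tp': "T' p = Some (\<sigma>, A, Asleep)" and H: "\<forall>b. b \<noteq> p \<longrightarrow> aw T' b \<longrightarrow> T b = None \<or> aw T b"
    show ?thesis
    proof (cases "card ?M' < card ?M")
      case True then show ?thesis using c1 by auto
    next
      case False
      then have "card ?M' = card ?M" using c2 by simp
      then have MEq: "?M' = ?M" using MM fN by (intro card_subset_eq) auto
      have "?W' \<subset> ?W"
      proof
        show "?W' \<subseteq> ?W"
        proof
          fix b assume b: "b \<in> ?W'"
          then have "b \<noteq> p" using Tp' unfolding aw_def by auto
          then have "T b = None \<or> aw T b" using H b by blast
          moreover have "T b \<noteq> None"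
          proof
            assume "T b = None"
            then have "b \<in> ?M'" using MEq b by blast
            then show False using b unfolding aw_def by auto
          qed
          ultimately show "b \<in> ?W" using b by blast
        qed
        have "p \<in> ?W" using pP Tp unfolding aw_def by blast
        moreover have "p \<notin> ?W'" using Tp' unfolding aw_def by simp
        ultimately show "?W' \<noteq> ?W" by blast
      qed
      then have "card ?W' < card ?W" using fN by (simp add: psubset_card_mono)
      then show ?thesis using c1 \<open>card ?M' = card ?M\<close> by auto
    qed
  qed
  then have "(mu a T', mu a T) \<in> RR" unfolding mu_def RR_def using c1 by auto
  then show ?thesis using awa' by blast
qed

lemma init_inv: "dc (init_tree Gs) \<and> nobf (init_tree Gs)"
proof (cases Gs)
  case Nil
  then show ?thesis by (simp add: dc_def nobf_def)
next
  case (Cons A As)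
  let ?c = "chain_map [] (map (\<lambda>B. (L0, B)) As)"
  have g: "good [] ?c" by (rule good_chain)
  have it: "init_tree Gs = ?c([] \<mapsto> (L0, A, Awake))" using Cons by simp
  have "dc (init_tree Gs)"
    unfolding dc_def it
  proof (intro allI impI)
    fix b x assume h: "(?c([] \<mapsto> (L0, A, Awake))) (b @ [x]) \<noteq> None"
    then have "?c (b @ [x]) \<noteq> None" by simp
    then have "b = [] \<or> ?c b \<noteq> None" using g unfolding good_def by blast
    then show "(?c([] \<mapsto> (L0, A, Awake))) b \<noteq> None" by auto
  qed
  moreover have "nobf (init_tree Gs)"
    unfolding nobf_def it
  proof (intro allI impI)
    fix b \<tau> D assume h: "(?c([] \<mapsto> (L0, A, Awake))) b = Some (\<tau>, D, Finished)"
    show "\<not> boxy D"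
    proof (cases "b = []")
      case True then show ?thesis using h by simp
    next
      case False
      then have "?c b = Some (\<tau>, D, Finished)" using h by simp
      then show ?thesis using g unfolding good_def by fastforce
    qed
  qed
  ultimately show ?thesis by blast
qed

theorem mainTheorem1:
  fixes C :: "hclause set" and \<Gamma> :: "fm set" and Gs :: "fm list" and T :: "nat \<Rightarrow> tree"
  assumes "finite \<Gamma>" and "\<forall>A\<in>\<Gamma>. plain A"
    and "distinct Gs" and "set Gs = \<Gamma>"
    and "tableau_run C Gs T"
    and "T (Suc n) a = Some (\<sigma>, A, Awake)"
  shows "\<exists>m \<ge> Suc n. selected (T m) a"
proof -
  have T0: "T 0 = init_tree Gs" and st: "\<And>i. step C (T i) (T (Suc i))"
    using assms(5) unfolding tableau_run_def by auto
  have inv: "dc (T i) \<and> nobf (T i)" for i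
  proof (induction i)
    case 0 then show ?case using init_inv T0 by simp
  next
    case (Suc i) then show ?case using step_inv[of "T i" C "T (Suc i)"] st[of i] by simp
  qed
  have main: "aw (T i) a \<longrightarrow> (\<exists>m \<ge> i. selected (T m) a)" for i
  proof (induction i rule: wf_induct_rule[OF wf_inv_image[OF wf_RR, where f="\<lambda>i. mu a (T i)"]])
    case (1 i)
    show ?case
    proof
      assume awi: "aw (T i) a"
      show "\<exists>m \<ge> i. selected (T m) a"
      proof (cases "selected (T i) a")
        case True then show ?thesis by blast
      next
        case False
have ii: "dc (T i)" "nobf (T i)" using inv[of i] by auto
        have h: "aw (T (Suc i)) a \<and> (mu a (T (Suc i)), mu a (T i)) \<in> RR"
          by (rule measure_step[OF ii awi st[of i] False])
        then have "(Suc i, i) \<in> inv_image RR (\<lambda>i. mu a (T i))" by simp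
        then have "aw (T (Suc i)) a \<longrightarrow> (\<exists>m \<ge> Suc i. selected (T m) a)" using 1 by blast
        then have "\<exists>m \<ge> Suc i. selected (T m) a" using h by blast
        then show ?thesis by (meson Suc_leD)
      qed
    qed
  qed
  have "aw (T (Suc n)) a" using assms(6) unfolding aw_def by blast
  then show ?thesis using main by blast
qed

end
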